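(* Let the data $A^\pm$, $C$, $\mu^\pm$ satisfy the standing assumptions below and let $x\in S\cap\mathbb{R}^n$. Then $x$ is a local optimum if and only if, for every $\mathcal{H}\in\mathfrak{G}(x)$, the minimum capacity of an $s$-$t$ cut in $\mathcal{H}$ equals $D$. Moreover, if $x$ is not a local optimum, then for some $\mathcal{H}\in\mathfrak{G}(x)$ there is a minimum $s$-$t$ cut $(X,Y)$ ($s\in X$, $t\in Y$) with capacity less than $D$, and $J=Y\cap[n]$ is a feasible descent direction at $x$, i.e. $x+\delta\chi_J\in S$ and $f(x+\delta\chi_J)<f(x)$ for all $0<\delta<\epsilon(x)$.
   Context: $\mathbb{R}_{\max}=\mathbb{R}\cup\{-\infty\}$, $[n]=\{1,\dots,n\}$, $\chi_J$ is the indicator vector of $J$. Data: $A^\pm=(a^\pm_{i,j})\in\mathbb{R}_{\max}^{m\times n}$, $C=(c_{k,j})\in\mathbb{R}_{\max}^{p\times n}$, $\mu^+\in\mathbb{Z}_{\ge0}^p$, $\mu^-\in\mathbb{Z}_{\ge0}^n$; $A=(a_{i,j})$ with $a_{i,j}=\max(a^+_{i,j},a^-_{i,j})$. Objective $f(x)=\sum_k\mu^+_k\max_j(c_{k,j}+x_j)-\sum_j\mu^-_jx_j$; feasible set $S=\{x:\max_j(a^+_{i,j}+x_j)\ge\max_j(a^-_{i,j}+x_j)\ \forall i\in[m]\}$. Standing assumptions: every row of $A$ and of $C$ has a finite entry; $\sum_k\mu^+_k=\sum_j\mu^-_j=:D$; the undirected graph on $\{u_1,\dots,u_p\}\cup[n]\cup\{w_1,\dots,w_m\}$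 with edges $\{u_k,j\}$ ($c_{k,j}\ne-\infty$) and $\{w_i,j\}$ ($a_{i,j}\ne-\infty$) is connected. A point $x\in S\cap\mathbb{R}^n$ is a local optimum if there is $\delta>0$ with $f(y)\ge f(x)$ for all $y\in S\cap\mathbb{R}^n$ with $\max_j|x_j-y_j|<\delta$. Let $\epsilon(x)$ be the smallest positive value among the numbers $|(a_{i,j_1}+x_{j_1})-(a_{i,j_2}+x_{j_2})|$ and $|(c_{k,j_1}+x_{j_1})-(c_{k,j_2}+x_{j_2})|$ over $i,k,j_1,j_2$. Tangent digraph $\mathcal{G}(x)$: vertices $U=\{u_1,\dots,u_p\}$, $V=[n]$, $W=\{w_1,\dots,w_m\}$; edges $E_1(x)=\{(u_k,j):\max_{j'}(c_{k,j'}+x_{j'})=c_{k,j}+x_j\}$, $E_2(x)=\{(w_i,j):\max_{j'}(a_{i,j'}+x_{j'})=a^-_{i,j}+x_j\}$, $E_3(x)=\{(j,w_i):\max_{j'}(a_{i,j'}+x_{j'})=a^+_{i,j}+x_j\}$. The extended digraph $\overline{\mathcal{G}}(x)$ adds vertices $s,t$ and edges $(s,u_k)$ of capacity $\mu^+_k$ ($k\in[p]$) and $(j,t)$ of capacity $\mu^-_j$ ($j\in[n]$); every edge of $E_1(x)\cup E_2(x)\cup E_3(x)$ has capacity $D$. $\mathfrak{G}(x)$ is the set of subgraphs of $\overline{\mathcal{G}}(x)$ obtained by deleting edges of $E_3(x)$ so that each $w_i$ has exactly one incoming edge. The capacity of an $s$-$t$ cut $(X,Y)$ is the total capacity of edges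 from $X$ to $Y$. *)

theory Defs
  imports "HOL-Library.Extended_Real"
begin

text \<open>Entries of R_max are modelled as extended reals different from plus infinity.
Indices range over {..<n}, {..<m}, {..<p} (0-based).\<close>

definition amax :: "(nat \<Rightarrow> nat \<Rightarrow> ereal) \<Rightarrow> (nat \<Rightarrow> nat \<Rightarrow> ereal) \<Rightarrow> nat \<Rightarrow> nat \<Rightarrow> ereal" where
  "amax Ap Am i j = max (Ap i j) (Am i j)"

definition rowmax :: "nat \<Rightarrow> (nat \<Rightarrow> nat \<Rightarrow> ereal) \<Rightarrow> nat \<Rightarrow> (nat \<Rightarrow> real) \<Rightarrow> ereal" where
  "rowmax n M i x = (SUP j\<in>{..<n}. M i j + ereal (x j))"

definition feasible :: "nat \<Rightarrow> nat \<Rightarrow> (nat \<Rightarrow> nat \<Rightarrow> ereal) \<Rightarrow> (nat \<Rightarrow> nat \<Rightarrow> ereal) \<Rightarrow> (nat \<Rightarrow> real) \<Rightarrow> bool" where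
  "feasible m n Ap Am x \<longleftrightarrow> (\<forall>i<m. rowmax n Ap i x \<ge> rowmax n Am i x)"

definition fobj :: "nat \<Rightarrow> nat \<Rightarrow> (nat \<Rightarrow> nat \<Rightarrow> ereal) \<Rightarrow> (nat \<Rightarrow> nat) \<Rightarrow> (nat \<Rightarrow> nat) \<Rightarrow> (nat \<Rightarrow> real) \<Rightarrow> real" where
  "fobj p n C mup mum x =
     (\<Sum>k<p. real (mup k) * real_of_ereal (rowmax n C k x)) - (\<Sum>j<n. real (mum j) * x j)"

definition local_opt :: "nat \<Rightarrow> nat \<Rightarrow> nat \<Rightarrow> (nat \<Rightarrow> nat \<Rightarrow> ereal) \<Rightarrow> (nat \<Rightarrow> nat \<Rightarrow> ereal) \<Rightarrow>
    (nat \<Rightarrow> nat \<Rightarrow> ereal) \<Rightarrow> (nat \<Rightarrow> nat) \<Rightarrow> (nat \<Rightarrow> nat) \<Rightarrow> (nat \<Rightarrow> real) \<Rightarrow> bool" where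
  "local_opt m n p Ap Am C mup mum x \<longleftrightarrow>
     feasible m n Ap Am x \<and>
     (\<exists>\<delta>>0. \<forall>y. feasible m n Ap Am y \<and> (\<forall>j<n. \<bar>x j - y j\<bar> < \<delta>)
                \<longrightarrow> fobj p n C mup mum y \<ge> fobj p n C mup mum x)"

text \<open>epsilon(x): smallest positive value among the (finite) differences; Inf {} = \<infinity>.\<close>
definition eps :: "nat \<Rightarrow> nat \<Rightarrow> nat \<Rightarrow> (nat \<Rightarrow> nat \<Rightarrow> ereal) \<Rightarrow> (nat \<Rightarrow> nat \<Rightarrow> ereal) \<Rightarrow>
    (nat \<Rightarrow> nat \<Rightarrow> ereal) \<Rightarrow> (nat \<Rightarrow> real) \<Rightarrow> ereal" where
  "eps m n p Ap Am C x = Inf ({e. e > 0} \<inter>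
     ({ereal \<bar>(real_of_ereal (amax Ap Am i j1) + x j1) - (real_of_ereal (amax Ap Am i j2) + x j2)\<bar> | i j1 j2.
         i < m \<and> j1 < n \<and> j2 < n \<and> amax Ap Am i j1 \<noteq> -\<infinity> \<and> amax Ap Am i j2 \<noteq> -\<infinity>} \<union>
      {ereal \<bar>(real_of_ereal (C k j1) + x j1) - (real_of_ereal (C k j2) + x j2)\<bar> | k j1 j2.
         k < p \<and> j1 < n \<and> j2 < n \<and> C k j1 \<noteq> -\<infinity> \<and> C k j2 \<noteq> -\<infinity>}))"

datatype vtx = Src | Snk | Uv nat | Vv nat | Wv nat

definition verts :: "nat \<Rightarrow> nat \<Rightarrow> nat \<Rightarrow> vtx set" where
  "verts m n p = {Src, Snk} \<union> Uv ` {..<p} \<union> Vv ` {..<n} \<union> Wv ` {..<m}"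

definition undir_edges :: "nat \<Rightarrow> nat \<Rightarrow> nat \<Rightarrow> (nat \<Rightarrow> nat \<Rightarrow> ereal) \<Rightarrow> (nat \<Rightarrow> nat \<Rightarrow> ereal) \<Rightarrow>
    (nat \<Rightarrow> nat \<Rightarrow> ereal) \<Rightarrow> (vtx \<times> vtx) set" where
  "undir_edges m n p Ap Am C =
     {(Uv k, Vv j) | k j. k < p \<and> j < n \<and> C k j \<noteq> -\<infinity>} \<union>
     {(Vv j, Uv k) | k j. k < p \<and> j < n \<and> C k j \<noteq> -\<infinity>} \<union>
     {(Wv i, Vv j) | i j. i < m \<and> j < n \<and> amax Ap Am i j \<noteq> -\<infinity>} \<union>
     {(Vv j, Wv i) | i j. i < m \<and> j < n \<and> amax Ap Am i j \<noteq> -\<infinity>}"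

definition graph_connected :: "nat \<Rightarrow> nat \<Rightarrow> nat \<Rightarrow> (nat \<Rightarrow> nat \<Rightarrow> ereal) \<Rightarrow> (nat \<Rightarrow> nat \<Rightarrow> ereal) \<Rightarrow>
    (nat \<Rightarrow> nat \<Rightarrow> ereal) \<Rightarrow> bool" where
  "graph_connected m n p Ap Am C \<longleftrightarrow>
     (\<forall>a\<in>verts m n p - {Src, Snk}. \<forall>b\<in>verts m n p - {Src, Snk}.
        (a, b) \<in> (undir_edges m n p Ap Am C)\<^sup>*)"

definition E1 :: "nat \<Rightarrow> nat \<Rightarrow> (nat \<Rightarrow> nat \<Rightarrow> ereal) \<Rightarrow> (nat \<Rightarrow> real) \<Rightarrow> (vtx \<times> vtx) set" where
  "E1 n p C x = {(Uv k, Vv j) | k j. k < p \<and> j < n \<and> rowmax n C k x = C k j + ereal (x j)}"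

definition E2 :: "nat \<Rightarrow> nat \<Rightarrow> (nat \<Rightarrow> nat \<Rightarrow> ereal) \<Rightarrow> (nat \<Rightarrow> nat \<Rightarrow> ereal) \<Rightarrow> (nat \<Rightarrow> real) \<Rightarrow> (vtx \<times> vtx) set" where
  "E2 m n Ap Am x = {(Wv i, Vv j) | i j. i < m \<and> j < n \<and> rowmax n (amax Ap Am) i x = Am i j + ereal (x j)}"

definition E3 :: "nat \<Rightarrow> nat \<Rightarrow> (nat \<Rightarrow> nat \<Rightarrow> ereal) \<Rightarrow> (nat \<Rightarrow> nat \<Rightarrow> ereal) \<Rightarrow> (nat \<Rightarrow> real) \<Rightarrow> (vtx \<times> vtx) set" where
  "E3 m n Ap Am x = {(Vv j, Wv i) | i j. i < m \<and> j < n \<and> rowmax n (amax Ap Am) i x = Ap i j + ereal (x j)}"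

definition Eext :: "nat \<Rightarrow> nat \<Rightarrow> nat \<Rightarrow> (nat \<Rightarrow> nat \<Rightarrow> ereal) \<Rightarrow> (nat \<Rightarrow> nat \<Rightarrow> ereal) \<Rightarrow>
    (nat \<Rightarrow> nat \<Rightarrow> ereal) \<Rightarrow> (nat \<Rightarrow> real) \<Rightarrow> (vtx \<times> vtx) set" where
  "Eext m n p Ap Am C x = E1 n p C x \<union> E2 m n Ap Am x \<union> E3 m n Ap Am x \<union>
     {(Src, Uv k) | k. k < p} \<union> {(Vv j, Snk) | j. j < n}"

fun cap :: "(nat \<Rightarrow> nat) \<Rightarrow> (nat \<Rightarrow> nat) \<Rightarrow> nat \<Rightarrow> vtx \<times> vtx \<Rightarrow> nat" where
  "cap mup mum D (Src, Uv k) = mup k"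
| "cap mup mum D (Vv j, Snk) = mum j"
| "cap mup mum D _ = D"

text \<open>The family frak-G(x): subgraphs (given by edge sets) obtained by deleting edges of E3
  so that every w_i has exactly one incoming edge.\<close>
definition subgraphs :: "nat \<Rightarrow> nat \<Rightarrow> nat \<Rightarrow> (nat \<Rightarrow> nat \<Rightarrow> ereal) \<Rightarrow> (nat \<Rightarrow> nat \<Rightarrow> ereal) \<Rightarrow>
    (nat \<Rightarrow> nat \<Rightarrow> ereal) \<Rightarrow> (nat \<Rightarrow> real) \<Rightarrow> (vtx \<times> vtx) set set" where
  "subgraphs m n p Ap Am C x = {H. Eext m n p Ap Am C x - E3 m n Ap Am x \<subseteq> H \<and> H \<subseteq> Eext m n p Ap Am C x \<and>
       (\<forall>i<m. card {v. (v, Wv i) \<in> H} = 1)}"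

text \<open>s-t cuts (X, verts - X) with Src in X, Snk not in X.\<close>
definition st_cuts :: "nat \<Rightarrow> nat \<Rightarrow> nat \<Rightarrow> vtx set set" where
  "st_cuts m n p = {X. X \<subseteq> verts m n p \<and> Src \<in> X \<and> Snk \<notin> X}"

definition cut_cap :: "(nat \<Rightarrow> nat) \<Rightarrow> (nat \<Rightarrow> nat) \<Rightarrow> nat \<Rightarrow> (vtx \<times> vtx) set \<Rightarrow> vtx set \<Rightarrow> nat" where
  "cut_cap mup mum D H X = (\<Sum>e\<in>{e\<in>H. fst e \<in> X \<and> snd e \<notin> X}. cap mup mum D e)"

definition min_cut :: "nat \<Rightarrow> nat \<Rightarrow> nat \<Rightarrow> (nat \<Rightarrow> nat) \<Rightarrow> (nat \<Rightarrow> nat) \<Rightarrow> nat \<Rightarrow> (vtx \<times> vtx) set \<Rightarrow> nat" where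
  "min_cut m n p mup mum D H = Min (cut_cap mup mum D H ` st_cuts m n p)"

end

theory Submission
  imports Defs
begin

lemma rowmax_ge: "j < n \<Longrightarrow> M i j + ereal (x j) \<le> rowmax n M i x"
  unfolding rowmax_def by (rule SUP_upper) auto

lemma rowmax_le: "(\<And>j. j < n \<Longrightarrow> M i j + ereal (x j) \<le> b) \<Longrightarrow> rowmax n M i x \<le> b"
  unfolding rowmax_def by (rule SUP_least) auto

lemma rowmax_att: assumes "0 < n" shows "\<exists>j<n. rowmax n M i x = M i j + ereal (x j)"
proof -
  have "Sup ((\<lambda>j. M i j + ereal (x j)) ` {..<n}) \<in> (\<lambda>j. M i j + ereal (x j)) ` {..<n}"
  proof (rule finite_Sup_in)
    fix u v assume "u \<in> (\<lambda>j. M i j + ereal (x j)) ` {..<n}" "v \<in> (\<lambda>j. M i j + ereal (x j)) ` {..<n}"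
    then show "sup u v \<in> (\<lambda>j. M i j + ereal (x j)) ` {..<n}"
      by (cases "u \<le> v") (simp_all add: sup_max max_def)
  qed (use assms in auto)
  then show ?thesis unfolding rowmax_def by auto
qed

lemma rowmax_real:
  assumes fin: "\<forall>j<n. M i j \<noteq> \<infinity>" and ex: "\<exists>j<n. M i j \<noteq> -\<infinity>"
  shows "\<exists>r. rowmax n M i x = ereal r"
proof -
  from ex obtain j where j: "j<n" "M i j \<noteq> -\<infinity>" by auto
  then have n: "0<n" by auto
  from rowmax_att[OF n, of M i x] obtain j0 where j0: "j0<n" "rowmax n M i x = M i j0 + ereal (x j0)" by auto
  have ge: "M i j + ereal (x j) \<le> rowmax n M i x" by (rule rowmax_ge[OF j(1)])
  have "M i j0 \<noteq> \<infinity>" using fin j0(1) by simp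
  then have "M i j0 + ereal (x j0) \<noteq> \<infinity>" by simp
  then have a: "rowmax n M i x \<noteq> \<infinity>" using j0(2) by simp
  have b: "rowmax n M i x \<noteq> -\<infinity>"
  proof
    assume "rowmax n M i x = -\<infinity>"
    with ge have "M i j + ereal (x j) = -\<infinity>" by simp
    with j show False by simp
  qed
  show ?thesis using a b by (cases "rowmax n M i x") simp_all
qed

lemma rowmax_shift:
  fixes \<delta> :: real
  assumes fin: "\<forall>j<n. M i j \<noteq> \<infinity>" and ex: "\<exists>j<n. M i j \<noteq> -\<infinity>" and dpos: "0 < \<delta>"
    and gap: "\<And>j1 j2. j1<n \<Longrightarrow> j2<n \<Longrightarrow> M i j1 \<noteq> -\<infinity> \<Longrightarrow> M i j1 + ereal (x j1) < M i j2 + ereal (x j2)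
               \<Longrightarrow> M i j1 + ereal (x j1 + \<delta>) < M i j2 + ereal (x j2)"
  shows "rowmax n M i (\<lambda>j. x j + (if P j then \<delta> else 0)) =
         rowmax n M i x + ereal (if (\<exists>j<n. P j \<and> rowmax n M i x = M i j + ereal (x j)) then \<delta> else 0)"
proof -
  from ex have n: "0<n" by auto
  obtain r where r: "rowmax n M i x = ereal r" using rowmax_real[where M=M and i=i and n=n and x=x, OF fin ex] by auto
  from rowmax_att[OF n, of M i x] obtain j0 where j0: "j0<n" "rowmax n M i x = M i j0 + ereal (x j0)" by auto
  have le: "M i j + ereal (x j) \<le> ereal r" if "j<n" for j using rowmax_ge[OF that, of M i x] r by simp
  show ?thesis
  proof (cases "\<exists>j<n. P j \<and> rowmax n M i x = M i j + ereal (x j)")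
    case True
    then obtain j1 where j1: "j1<n" "P j1" "ereal r = M i j1 + ereal (x j1)" using r by auto
    have "rowmax n M i (\<lambda>j. x j + (if P j then \<delta> else 0)) = ereal (r + \<delta>)"
    proof (rule antisym)
      show "rowmax n M i (\<lambda>j. x j + (if P j then \<delta> else 0)) \<le> ereal (r + \<delta>)"
      proof (rule rowmax_le)
        fix j assume j: "j<n"
        show "M i j + ereal (x j + (if P j then \<delta> else 0)) \<le> ereal (r + \<delta>)"
          using le[OF j] fin j dpos by (cases "M i j") auto
      qed
      have "M i j1 + ereal (x j1 + (if P j1 then \<delta> else 0)) = ereal (r + \<delta>)"
        using j1 fin by (cases "M i j1") auto
      then show "ereal (r + \<delta>) \<le> rowmax n M i (\<lambda>j. x j + (if P j then \<delta> else 0))"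
        using rowmax_ge[OF j1(1), of M i "(\<lambda>j. x j + (if P j then \<delta> else 0))"] by simp
    qed
    then show ?thesis using True r by simp
  next
    case False
    have "rowmax n M i (\<lambda>j. x j + (if P j then \<delta> else 0)) = ereal r"
    proof (rule antisym)
      show "rowmax n M i (\<lambda>j. x j + (if P j then \<delta> else 0)) \<le> ereal r"
      proof (rule rowmax_le)
        fix j assume j: "j<n"
        show "M i j + ereal (x j + (if P j then \<delta> else 0)) \<le> ereal r"
        proof (cases "P j")
          case True
          then have ne: "M i j + ereal (x j) \<noteq> ereal r" using False r j by auto
          show ?thesis
          proof (cases "M i j = -\<infinity>")
            case True then show ?thesis by simp
          next
            case fj: False
            have "M i j + ereal (x j) < M i j0 + ereal (x j0)" using le[OF j] ne j0 r by auto
            from gap[OF j j0(1) fj this] show ?thesis using True j0 r by simp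
          qed
        next
          case False then show ?thesis using le[OF j] by simp
        qed
      qed
      have "\<not> P j0" using False j0 by auto
      then show "ereal r \<le> rowmax n M i (\<lambda>j. x j + (if P j then \<delta> else 0))"
        using rowmax_ge[OF j0(1), of M i "(\<lambda>j. x j + (if P j then \<delta> else 0))"] j0 r by simp
    qed
    then show ?thesis by (subst if_not_P[OF False]) (simp add: r)
  qed
qed

lemma rowmax_local:
  fixes \<delta>0 :: real
  assumes fin: "\<forall>j<n. M i j \<noteq> \<infinity>" and ex: "\<exists>j<n. M i j \<noteq> -\<infinity>"
    and gap: "\<And>j1 j2. j1<n \<Longrightarrow> j2<n \<Longrightarrow> M i j1 \<noteq> -\<infinity> \<Longrightarrow> M i j1 + ereal (x j1) < M i j2 + ereal (x j2)
               \<Longrightarrow> M i j1 + ereal (x j1 + 2*\<delta>0) \<le> M i j2 + ereal (x j2)"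
    and dd: "\<And>j. j<n \<Longrightarrow> \<bar>y j - x j\<bar> < \<delta>0"
  shows "rowmax n M i y = rowmax n M i x +
           ereal (Max ((\<lambda>j. y j - x j) ` {j. j<n \<and> rowmax n M i x = M i j + ereal (x j)}))"
proof -
  from ex have n: "0<n" by auto
  obtain r where r: "rowmax n M i x = ereal r" using rowmax_real[where M=M and i=i and n=n and x=x, OF fin ex] by auto
  from rowmax_att[OF n, of M i x] obtain j0 where j0: "j0<n" "rowmax n M i x = M i j0 + ereal (x j0)" by auto
  have le: "M i j + ereal (x j) \<le> ereal r" if "j<n" for j using rowmax_ge[OF that, of M i x] r by simp
  have r0: "M i j0 + ereal (x j0) = ereal r" using j0 r by simp
  define Sset where "Sset = {j. j<n \<and> rowmax n M i x = M i j + ereal (x j)}"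
  have Sfin: "finite Sset" unfolding Sset_def by auto
  have Sne: "j0 \<in> Sset" using j0 unfolding Sset_def by auto
  define mx where "mx = Max ((\<lambda>j. y j - x j) ` Sset)"
  have "mx \<in> (\<lambda>j. y j - x j) ` Sset" unfolding mx_def using Sfin Sne by (intro Max_in) auto
  then obtain js where js: "js \<in> Sset" "y js - x js = mx" by auto
  have mxge: "y j - x j \<le> mx" if "j \<in> Sset" for j unfolding mx_def using Sfin that by (intro Max_ge) auto
  have mxlow: "-\<delta>0 < mx" using dd[of js] js unfolding Sset_def by auto
  have "rowmax n M i y = ereal (r + mx)"
  proof (rule antisym)
    show "rowmax n M i y \<le> ereal (r + mx)"
    proof (rule rowmax_le)
      fix j assume j: "j<n"
      show "M i j + ereal (y j) \<le> ereal (r + mx)"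
      proof (cases "M i j")
        case (real a)
        show ?thesis
        proof (cases "a + x j = r")
          case True
          then have "j \<in> Sset" using r j real unfolding Sset_def by auto
          then show ?thesis using mxge[of j] True real by simp
        next
          case False
          have "a + x j \<le> r" using le[OF j] real by simp
          with False have "M i j + ereal (x j) < M i j0 + ereal (x j0)" using real r0 by simp
          from gap[OF j j0(1) _ this] have "a + x j + 2*\<delta>0 \<le> r" using real r0 by simp
          then show ?thesis using real dd[OF j] mxlow by simp
        qed
      qed (use fin j in auto)
    qed
    show "ereal (r + mx) \<le> rowmax n M i y"
      using rowmax_ge[of js n M i y] js r unfolding Sset_def by (cases "M i js") auto
  qed
  then show ?thesis using r unfolding Sset_def mx_def by simp
qed

lemma layer:
  fixes d :: "nat \<Rightarrow> real" and N P I :: "nat set" and Sf Af Bf :: "nat \<Rightarrow> nat set" and mup mum :: "nat \<Rightarrow> nat"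
  assumes fN: "finite N" and fP: "finite P"
   and S: "\<And>k. k\<in>P \<Longrightarrow> Sf k \<subseteq> N \<and> Sf k \<noteq> {}"
   and Af: "\<And>i. i\<in>I \<Longrightarrow> Af i \<subseteq> N"
   and bal: "(\<Sum>k\<in>P. real (mup k)) = (\<Sum>j\<in>N. real (mum j))"
   and cons: "\<And>i j. i\<in>I \<Longrightarrow> j \<in> Bf i \<Longrightarrow> \<exists>j'\<in>Af i. d j \<le> d j'"
   and neg: "(\<Sum>k\<in>P. real (mup k) * Max (d ` Sf k)) - (\<Sum>j\<in>N. real (mum j) * d j) < 0"
  shows "\<exists>J\<subseteq>N. (\<forall>i\<in>I. Bf i \<inter> J \<noteq> {} \<longrightarrow> Af i \<inter> J \<noteq> {}) \<and>
           (\<Sum>k\<in>P. if Sf k \<inter> J \<noteq> {} then real (mup k) else 0) < (\<Sum>j\<in>J. real (mum j))"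
  using cons neg
proof (induction "card (d ` N)" arbitrary: d rule: less_induct)
  case less
  have Nne: "N \<noteq> {}"
  proof
    assume "N = {}"
    then have "P = {}" using S by blast
    with less.prems(2) \<open>N = {}\<close> show False by simp
  qed
  define t where "t = Max (d ` N)"
  have tin: "t \<in> d ` N" unfolding t_def using fN Nne by (intro Max_in) auto
  have tge: "d j \<le> t" if "j \<in> N" for j unfolding t_def using fN that by (intro Max_ge) auto
  show ?case
  proof (cases "d ` N = {t}")
    case True
    then have dt: "d j = t" if "j \<in> N" for j using that by auto
    have "Max (d ` Sf k) = t" if "k \<in> P" for k
    proof -
      have "d ` Sf k = {t}" using S[OF that] dt by auto
      then show ?thesis by simp
    qed
    then have "(\<Sum>k\<in>P. real (mup k) * Max (d ` Sf k)) = (\<Sum>k\<in>P. real (mup k)) * t"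
      by (simp add: sum_distrib_right)
    moreover have "(\<Sum>j\<in>N. real (mum j) * d j) = (\<Sum>j\<in>N. real (mum j)) * t"
      using dt by (simp add: sum_distrib_right)
    ultimately show ?thesis using less.prems(2) bal by simp
  next
    case False
    define R where "R = d ` N - {t}"
    have Rne: "R \<noteq> {}" using False tin unfolding R_def by auto
    have Rfin: "finite R" unfolding R_def using fN by auto
    define t' where "t' = Max R"
    have t'in: "t' \<in> R" unfolding t'_def using Rfin Rne by (intro Max_in) auto
    have t'ge: "v \<le> t'" if "v \<in> R" for v unfolding t'_def using Rfin that by (intro Max_ge) auto
    have tt': "t' < t" using t'in tge unfolding R_def by force
    define d' where "d' = (\<lambda>j. min (d j) t')"
    define J where "J = {j\<in>N. d j = t}"
    have dle: "d j \<le> t'" if "j \<in> N" "d j \<noteq> t" for j using t'ge[of "d j"] that unfolding R_def by auto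
    have img: "d' ` N = R"
    proof
      show "d' ` N \<subseteq> R"
      proof
        fix v assume "v \<in> d' ` N"
        then obtain j where j: "j \<in> N" "v = d' j" by auto
        show "v \<in> R"
        proof (cases "d j = t")
          case True then show ?thesis using j t'in tt' unfolding d'_def by auto
        next
          case False then show ?thesis using j dle[OF j(1) False] unfolding d'_def R_def by auto
        qed
      qed
      show "R \<subseteq> d' ` N"
      proof
        fix v assume v: "v \<in> R"
        then obtain j where j: "j \<in> N" "v = d j" "d j \<noteq> t" unfolding R_def by auto
        then have "d' j = v" using dle[OF j(1) j(3)] unfolding d'_def by auto
        then show "v \<in> d' ` N" using j(1) by (metis image_eqI)
      qed
    qed
    have cardless: "card (d' ` N) < card (d ` N)"
      unfolding img R_def using fN tin by (intro card_Diff1_less) auto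
    have I2: "d j = d' j + (if j \<in> J then t - t' else 0)" if "j \<in> N" for j
      using that dle[OF that] tt' unfolding d'_def J_def by auto
    have I1: "Max (d ` Sf k) = Max (d' ` Sf k) + (if Sf k \<inter> J \<noteq> {} then t - t' else 0)" if k: "k \<in> P" for k
    proof -
      have fS: "finite (Sf k)" using S[OF k] fN finite_subset by blast
      have neS: "Sf k \<noteq> {}" using S[OF k] by auto
      show ?thesis
      proof (cases "Sf k \<inter> J \<noteq> {}")
        case True
        then obtain j where j: "j \<in> Sf k" "j \<in> J" by auto
        have "Max (d ` Sf k) = t"
        proof (rule antisym)
          show "Max (d ` Sf k) \<le> t" using fS neS S[OF k] tge by (subst Max_le_iff) auto
          show "t \<le> Max (d ` Sf k)" using fS j unfolding J_def by (intro Max_ge_iff[THEN iffD2]) auto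
        qed
        moreover have "Max (d' ` Sf k) = t'"
        proof (rule antisym)
          show "Max (d' ` Sf k) \<le> t'" using fS neS unfolding d'_def by (subst Max_le_iff) auto
          show "t' \<le> Max (d' ` Sf k)" using fS j tt' unfolding J_def d'_def
            by (intro Max_ge_iff[THEN iffD2]) (auto intro: less_imp_le)
        qed
        ultimately show ?thesis using True by simp
      next
        case False
        have "d ` Sf k = d' ` Sf k"
        proof (rule image_cong[OF refl])
          fix j assume "j \<in> Sf k"
          then have "j \<in> N" "d j \<noteq> t" using False S[OF k] unfolding J_def by auto
          then show "d j = d' j" using dle unfolding d'_def by auto
        qed
        then show ?thesis using False by simp
      qed
    qed
    define g where "g = (\<Sum>k\<in>P. if Sf k \<inter> J \<noteq> {} then real (mup k) else 0) - (\<Sum>j\<in>J. real (mum j))"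
    have e1: "(\<Sum>k\<in>P. real (mup k) * Max (d ` Sf k)) =
        (\<Sum>k\<in>P. real (mup k) * Max (d' ` Sf k)) + (t - t') * (\<Sum>k\<in>P. if Sf k \<inter> J \<noteq> {} then real (mup k) else 0)"
    proof -
      have "(\<Sum>k\<in>P. real (mup k) * Max (d ` Sf k)) = (\<Sum>k\<in>P. real (mup k) * Max (d' ` Sf k) + (t - t') * (if Sf k \<inter> J \<noteq> {} then real (mup k) else 0))"
        by (rule sum.cong) (auto simp: I1 algebra_simps)
      also have "\<dots> = (\<Sum>k\<in>P. real (mup k) * Max (d' ` Sf k)) + (t - t') * (\<Sum>k\<in>P. if Sf k \<inter> J \<noteq> {} then real (mup k) else 0)"
        by (simp add: sum.distrib sum_distrib_left)
      finally show ?thesis .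
    qed
    have e2: "(\<Sum>j\<in>N. real (mum j) * d j) =
        (\<Sum>j\<in>N. real (mum j) * d' j) + (t - t') * (\<Sum>j\<in>J. real (mum j))"
    proof -
      have "(\<Sum>j\<in>N. real (mum j) * d j) = (\<Sum>j\<in>N. real (mum j) * d' j + (t - t') * (if j \<in> J then real (mum j) else 0))"
        by (rule sum.cong) (auto simp: I2 algebra_simps)
      also have "\<dots> = (\<Sum>j\<in>N. real (mum j) * d' j) + (t - t') * (\<Sum>j\<in>N. if j \<in> J then real (mum j) else 0)"
        by (simp add: sum.distrib sum_distrib_left)
      also have "(\<Sum>j\<in>N. if j \<in> J then real (mum j) else 0) = (\<Sum>j\<in>J. real (mum j))"
        unfolding J_def using fN by (simp add: sum.inter_filter)
      finally show ?thesis .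
    qed
    show ?thesis
    proof (cases "g < 0")
      case True
      have "J \<subseteq> N" unfolding J_def by auto
      moreover have "\<forall>i\<in>I. Bf i \<inter> J \<noteq> {} \<longrightarrow> Af i \<inter> J \<noteq> {}"
      proof (intro ballI impI)
        fix i assume i: "i \<in> I" and "Bf i \<inter> J \<noteq> {}"
        then obtain j where j: "j \<in> Bf i" "j \<in> J" by auto
        obtain j' where j': "j' \<in> Af i" "d j \<le> d j'" using less.prems(1)[OF i j(1)] by auto
        have "j' \<in> N" using Af[OF i] j' by auto
        then have "j' \<in> J" using tge[of j'] j' j unfolding J_def by auto
        then show "Af i \<inter> J \<noteq> {}" using j' by auto
      qed
      ultimately show ?thesis using True unfolding g_def by auto
    next
      case False
      have "(t - t') * g \<ge> 0" using False tt' by simp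
      then have neg': "(\<Sum>k\<in>P. real (mup k) * Max (d' ` Sf k)) - (\<Sum>j\<in>N. real (mum j) * d' j) < 0"
        using less.prems(2) e1 e2 unfolding g_def by (simp add: algebra_simps)
      have cons': "\<exists>j'\<in>Af i. d' j \<le> d' j'" if ij: "i \<in> I" "j \<in> Bf i" for i j
      proof -
        obtain j' where "j' \<in> Af i" "d j \<le> d j'" using less.prems(1)[OF ij] by auto
        then show ?thesis unfolding d'_def by (intro bexI[of _ j']) auto
      qed
      show ?thesis using less.hyps[OF cardless cons' neg'] by blast
    qed
  qed
qed

locale stp =
  fixes m n p D :: nat
    and Ap Am C :: "nat \<Rightarrow> nat \<Rightarrow> ereal"
    and mup mum :: "nat \<Rightarrow> nat"
    and x :: "nat \<Rightarrow> real"
  assumes entries_Rmax: "\<forall>i<m. \<forall>j<n. Ap i j \<noteq> \<infinity> \<and> Am i j \<noteq> \<infinity>"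
    and entries_Rmax_C: "\<forall>k<p. \<forall>j<n. C k j \<noteq> \<infinity>"
    and rowsA: "\<forall>i<m. \<exists>j<n. amax Ap Am i j \<noteq> -\<infinity>"
    and rowsC: "\<forall>k<p. \<exists>j<n. C k j \<noteq> -\<infinity>"
    and sum_plus: "(\<Sum>k<p. mup k) = D"
    and sum_minus: "(\<Sum>j<n. mum j) = D"
    and feas: "feasible m n Ap Am x"
begin

abbreviation "AM \<equiv> amax Ap Am"
abbreviation "epsx \<equiv> eps m n p Ap Am C x"

definition Sk where "Sk k = {j. j<n \<and> rowmax n C k x = C k j + ereal (x j)}"
definition Ai where "Ai i = {j. j<n \<and> rowmax n AM i x = Ap i j + ereal (x j)}"
definition Bi where "Bi i = {j. j<n \<and> rowmax n AM i x = Am i j + ereal (x j)}"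

lemma AM_fin: "i<m \<Longrightarrow> j<n \<Longrightarrow> AM i j \<noteq> \<infinity>"
  using entries_Rmax by (auto simp: amax_def max_def)

lemma AM_finrow: "i<m \<Longrightarrow> \<forall>j<n. AM i j \<noteq> \<infinity>" using AM_fin by auto
lemma C_finrow: "k<p \<Longrightarrow> \<forall>j<n. C k j \<noteq> \<infinity>" using entries_Rmax_C by auto

lemma Ap_le_AM: "Ap i j \<le> AM i j" and Am_le_AM: "Am i j \<le> AM i j" by (auto simp: amax_def)

lemma eps_set_finite:
  "finite ({ereal \<bar>(real_of_ereal (amax Ap Am i j1) + x j1) - (real_of_ereal (amax Ap Am i j2) + x j2)\<bar> | i j1 j2.
         i < m \<and> j1 < n \<and> j2 < n \<and> amax Ap Am i j1 \<noteq> -\<infinity> \<and> amax Ap Am i j2 \<noteq> -\<infinity>} \<union>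
      {ereal \<bar>(real_of_ereal (C k j1) + x j1) - (real_of_ereal (C k j2) + x j2)\<bar> | k j1 j2.
         k < p \<and> j1 < n \<and> j2 < n \<and> C k j1 \<noteq> -\<infinity> \<and> C k j2 \<noteq> -\<infinity>})" (is "finite (?A \<union> ?B)")
proof -
  have "?A \<subseteq> (\<lambda>(i,j1,j2). ereal \<bar>(real_of_ereal (amax Ap Am i j1) + x j1) - (real_of_ereal (amax Ap Am i j2) + x j2)\<bar>)
      ` ({..<m} \<times> {..<n} \<times> {..<n})"
  proof
    fix e assume "e \<in> ?A"
    then obtain i j1 j2 where "e = ereal \<bar>(real_of_ereal (amax Ap Am i j1) + x j1) - (real_of_ereal (amax Ap Am i j2) + x j2)\<bar>" "i<m" "j1<n" "j2<n" by blast
    then show "e \<in> (\<lambda>(i,j1,j2). ereal \<bar>(real_of_ereal (amax Ap Am i j1) + x j1) - (real_of_ereal (amax Ap Am i j2) + x j2)\<bar>)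
      ` ({..<m} \<times> {..<n} \<times> {..<n})" by (intro image_eqI[where x="(i,j1,j2)"]) auto
  qed
  moreover have "?B \<subseteq> (\<lambda>(k,j1,j2). ereal \<bar>(real_of_ereal (C k j1) + x j1) - (real_of_ereal (C k j2) + x j2)\<bar>)
      ` ({..<p} \<times> {..<n} \<times> {..<n})"
  proof
    fix e assume "e \<in> ?B"
    then obtain k j1 j2 where "e = ereal \<bar>(real_of_ereal (C k j1) + x j1) - (real_of_ereal (C k j2) + x j2)\<bar>" "k<p" "j1<n" "j2<n" by blast
    then show "e \<in> (\<lambda>(k,j1,j2). ereal \<bar>(real_of_ereal (C k j1) + x j1) - (real_of_ereal (C k j2) + x j2)\<bar>)
      ` ({..<p} \<times> {..<n} \<times> {..<n})" by (intro image_eqI[where x="(k,j1,j2)"]) auto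
  qed
  ultimately show ?thesis by (meson finite_SigmaI finite_Un finite_imageI finite_lessThan finite_subset)
qed

lemma eps_pos: "0 < epsx"
proof -
  let ?T = "{e::ereal. e > 0} \<inter> ({ereal \<bar>(real_of_ereal (amax Ap Am i j1) + x j1) - (real_of_ereal (amax Ap Am i j2) + x j2)\<bar> | i j1 j2.
         i < m \<and> j1 < n \<and> j2 < n \<and> amax Ap Am i j1 \<noteq> -\<infinity> \<and> amax Ap Am i j2 \<noteq> -\<infinity>} \<union>
      {ereal \<bar>(real_of_ereal (C k j1) + x j1) - (real_of_ereal (C k j2) + x j2)\<bar> | k j1 j2.
         k < p \<and> j1 < n \<and> j2 < n \<and> C k j1 \<noteq> -\<infinity> \<and> C k j2 \<noteq> -\<infinity>})"
  have e: "epsx = Inf ?T" unfolding eps_def by simp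
  have fT: "finite ?T" using eps_set_finite by auto
  show ?thesis
  proof (cases "?T = {}")
    case True then show ?thesis using e by (simp add: top_ereal_def)
  next
    case False
    have "Inf ?T \<in> ?T"
    proof (rule finite_Inf_in[OF fT False])
      fix u v assume "u \<in> ?T" "v \<in> ?T"
      then show "inf u v \<in> ?T" by (cases "u \<le> v") (simp_all add: inf_min min_def)
    qed
    then show ?thesis using e by simp
  qed
qed

lemma gap_AM:
  assumes "i<m" "j1<n" "j2<n" "AM i j1 = ereal a1" "AM i j2 = ereal a2" "a1 + x j1 < a2 + x j2"
  shows "epsx \<le> ereal (a2 + x j2 - (a1 + x j1))"
proof -
  have "ereal \<bar>(real_of_ereal (AM i j1) + x j1) - (real_of_ereal (AM i j2) + x j2)\<bar> = ereal (a2 + x j2 - (a1 + x j1))"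
    using assms by simp
  moreover have "ereal (a2 + x j2 - (a1 + x j1)) > 0" using assms by simp
  ultimately show ?thesis unfolding eps_def using assms
    apply (intro Inf_lower IntI CollectI)
     apply simp
    apply (rule UnI1)
    apply (rule CollectI)
    apply (rule exI[of _ i], rule exI[of _ j1], rule exI[of _ j2])
    by simp
qed

lemma gap_C:
  assumes "k<p" "j1<n" "j2<n" "C k j1 = ereal a1" "C k j2 = ereal a2" "a1 + x j1 < a2 + x j2"
  shows "epsx \<le> ereal (a2 + x j2 - (a1 + x j1))"
proof -
  have "ereal \<bar>(real_of_ereal (C k j1) + x j1) - (real_of_ereal (C k j2) + x j2)\<bar> = ereal (a2 + x j2 - (a1 + x j1))"
    using assms by simp
  moreover have "ereal (a2 + x j2 - (a1 + x j1)) > 0" using assms by simp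
  ultimately show ?thesis unfolding eps_def using assms
    apply (intro Inf_lower IntI CollectI)
     apply simp
    apply (rule UnI2)
    apply (rule CollectI)
    apply (rule exI[of _ k], rule exI[of _ j1], rule exI[of _ j2])
    by simp
qed

lemma gapd_gen:
  assumes g: "\<And>a1 a2. M j1 = ereal a1 \<Longrightarrow> M j2 = ereal a2 \<Longrightarrow> a1 + x j1 < a2 + x j2 \<Longrightarrow> epsx \<le> ereal (a2 + x j2 - (a1 + x j1))"
    and f1: "M j1 \<noteq> \<infinity>" and f2: "M j2 \<noteq> \<infinity>" and n1: "M j1 \<noteq> -\<infinity>"
    and lt: "M j1 + ereal (x j1) < M j2 + ereal (x j2)"
  shows "ereal \<delta> < epsx \<Longrightarrow> M j1 + ereal (x j1 + \<delta>) < M j2 + ereal (x j2)"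
    and "ereal \<delta> \<le> epsx \<Longrightarrow> M j1 + ereal (x j1 + \<delta>) \<le> M j2 + ereal (x j2)"
proof -
  obtain a1 where a1: "M j1 = ereal a1" using f1 n1 by (cases "M j1") auto
  have n2: "M j2 \<noteq> -\<infinity>" using lt a1 by auto
  obtain a2 where a2: "M j2 = ereal a2" using f2 n2 by (cases "M j2") auto
  have lt': "a1 + x j1 < a2 + x j2" using lt a1 a2 by simp
  have e: "epsx \<le> ereal (a2 + x j2 - (a1 + x j1))" using g[OF a1 a2 lt'] .
  show "ereal \<delta> < epsx \<Longrightarrow> M j1 + ereal (x j1 + \<delta>) < M j2 + ereal (x j2)"
  proof -
    assume "ereal \<delta> < epsx"
    from this e have "ereal \<delta> < ereal (a2 + x j2 - (a1 + x j1))" by (rule order_less_le_trans)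
    then have "\<delta> < a2 + x j2 - (a1 + x j1)" by simp
    then show ?thesis using a1 a2 by simp
  qed
  show "ereal \<delta> \<le> epsx \<Longrightarrow> M j1 + ereal (x j1 + \<delta>) \<le> M j2 + ereal (x j2)"
  proof -
    assume "ereal \<delta> \<le> epsx"
    from this e have "ereal \<delta> \<le> ereal (a2 + x j2 - (a1 + x j1))" by (rule order_trans)
    then have "\<delta> \<le> a2 + x j2 - (a1 + x j1)" by simp
    then show ?thesis using a1 a2 by simp
  qed
qed

lemma gapd_AM:
  assumes "i<m" "j1<n" "j2<n" "AM i j1 \<noteq> -\<infinity>" "AM i j1 + ereal (x j1) < AM i j2 + ereal (x j2)"
  shows "ereal \<delta> < epsx \<Longrightarrow> AM i j1 + ereal (x j1 + \<delta>) < AM i j2 + ereal (x j2)"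
    and "ereal \<delta> \<le> epsx \<Longrightarrow> AM i j1 + ereal (x j1 + \<delta>) \<le> AM i j2 + ereal (x j2)"
proof -
  have g: "\<And>a1 a2. AM i j1 = ereal a1 \<Longrightarrow> AM i j2 = ereal a2 \<Longrightarrow> a1 + x j1 < a2 + x j2 \<Longrightarrow> epsx \<le> ereal (a2 + x j2 - (a1 + x j1))"
    using gap_AM[OF assms(1-3)] .
  show "ereal \<delta> < epsx \<Longrightarrow> AM i j1 + ereal (x j1 + \<delta>) < AM i j2 + ereal (x j2)"
    by (rule gapd_gen(1)[where M="AM i", OF g AM_fin[OF assms(1,2)] AM_fin[OF assms(1,3)] assms(4,5)])
  show "ereal \<delta> \<le> epsx \<Longrightarrow> AM i j1 + ereal (x j1 + \<delta>) \<le> AM i j2 + ereal (x j2)"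
    by (rule gapd_gen(2)[where M="AM i", OF g AM_fin[OF assms(1,2)] AM_fin[OF assms(1,3)] assms(4,5)])
qed

lemma gapd_C:
  assumes "k<p" "j1<n" "j2<n" "C k j1 \<noteq> -\<infinity>" "C k j1 + ereal (x j1) < C k j2 + ereal (x j2)"
  shows "ereal \<delta> < epsx \<Longrightarrow> C k j1 + ereal (x j1 + \<delta>) < C k j2 + ereal (x j2)"
    and "ereal \<delta> \<le> epsx \<Longrightarrow> C k j1 + ereal (x j1 + \<delta>) \<le> C k j2 + ereal (x j2)"
proof -
  have g: "\<And>a1 a2. C k j1 = ereal a1 \<Longrightarrow> C k j2 = ereal a2 \<Longrightarrow> a1 + x j1 < a2 + x j2 \<Longrightarrow> epsx \<le> ereal (a2 + x j2 - (a1 + x j1))"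
    using gap_C[OF assms(1-3)] .
  have f1: "C k j1 \<noteq> \<infinity>" and f2: "C k j2 \<noteq> \<infinity>" using entries_Rmax_C assms(1-3) by auto
  show "ereal \<delta> < epsx \<Longrightarrow> C k j1 + ereal (x j1 + \<delta>) < C k j2 + ereal (x j2)"
    by (rule gapd_gen(1)[where M="C k", OF g f1 f2 assms(4,5)])
  show "ereal \<delta> \<le> epsx \<Longrightarrow> C k j1 + ereal (x j1 + \<delta>) \<le> C k j2 + ereal (x j2)"
    by (rule gapd_gen(2)[where M="C k", OF g f1 f2 assms(4,5)])
qed

lemma rowmax_AM_real: "i<m \<Longrightarrow> \<exists>r. rowmax n AM i x = ereal r"
  by (rule rowmax_real[where M=AM and i=i and n=n and x=x]) (use AM_finrow rowsA in auto)

lemma rowmax_C_real: "k<p \<Longrightarrow> \<exists>r. rowmax n C k x = ereal r"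
  by (rule rowmax_real[where M=C and i=k and n=n and x=x]) (use C_finrow rowsC in auto)

lemma Ai_ne: assumes i: "i<m" shows "\<exists>j. j \<in> Ai i"
proof -
  have n: "0<n" using rowsA i by auto
  obtain j where j: "j<n" "rowmax n AM i x = AM i j + ereal (x j)" using rowmax_att[OF n, of AM i x] by auto
  show ?thesis
  proof (cases "Am i j \<le> Ap i j")
    case True
    then have "AM i j = Ap i j" by (simp add: amax_def max_def)
    then show ?thesis using j unfolding Ai_def by auto
  next
    case False
    then have am: "AM i j = Am i j" unfolding amax_def by (simp add: max_absorb2)
    have "rowmax n AM i x \<le> rowmax n Am i x" using rowmax_ge[OF j(1), of Am i x] j am by simp
    also have "\<dots> \<le> rowmax n Ap i x" using feas i unfolding feasible_def by auto
    finally have le1: "rowmax n AM i x \<le> rowmax n Ap i x" .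
    obtain j' where j': "j'<n" "rowmax n Ap i x = Ap i j' + ereal (x j')" using rowmax_att[OF n, of Ap i x] by auto
    have "Ap i j' + ereal (x j') \<le> AM i j' + ereal (x j')" by (simp add: Ap_le_AM add_right_mono)
    also have "\<dots> \<le> rowmax n AM i x" by (rule rowmax_ge[OF j'(1)])
    finally have "rowmax n AM i x = Ap i j' + ereal (x j')" using le1 j' by simp
    then show ?thesis using j' unfolding Ai_def by auto
  qed
qed

end

lemma verts_fin: "finite (verts m n p)" by (simp add: verts_def)

lemma Eext_sub: "Eext m n p Ap Am C x \<subseteq> verts m n p \<times> verts m n p"
proof -
  have "E1 n p C x \<subseteq> verts m n p \<times> verts m n p" by (auto simp: E1_def verts_def)
  moreover have "E2 m n Ap Am x \<subseteq> verts m n p \<times> verts m n p" by (auto simp: E2_def verts_def)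
  moreover have "E3 m n Ap Am x \<subseteq> verts m n p \<times> verts m n p" by (auto simp: E3_def verts_def)
  moreover have "{(Src, Uv k) | k. k < p} \<union> {(Vv j, Snk) | j. j < n} \<subseteq> verts m n p \<times> verts m n p" by (auto simp: verts_def)
  ultimately show ?thesis unfolding Eext_def by blast
qed

lemma Eext_fin: "finite (Eext m n p Ap Am C x)"
  using Eext_sub verts_fin by (meson finite_SigmaI finite_subset)

lemma sub_fin: "H \<in> subgraphs m n p Ap Am C x \<Longrightarrow> finite H"
  unfolding subgraphs_def using Eext_fin finite_subset by blast

lemma cross_le:
  assumes "finite H" "e \<in> H" "fst e \<in> X" "snd e \<notin> X"
  shows "cap mup mum D e \<le> cut_cap mup mum D H X"
  unfolding cut_cap_def using assms by (intro member_le_sum) auto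

lemma cut_le_super:
  assumes "finite Z" "{e\<in>H. fst e \<in> X \<and> snd e \<notin> X} \<subseteq> Z"
  shows "cut_cap mup mum D H X \<le> sum (cap mup mum D) Z"
  unfolding cut_cap_def using assms by (intro sum_mono2) auto

lemma cut_ge_sub:
  assumes "finite H" "Z \<subseteq> {e\<in>H. fst e \<in> X \<and> snd e \<notin> X}"
  shows "sum (cap mup mum D) Z \<le> cut_cap mup mum D H X"
  unfolding cut_cap_def using assms by (intro sum_mono2) auto

lemma sum_st_edges:
  assumes "finite K" "finite J"
  shows "sum (cap mup mum D) ((\<lambda>k. (Src, Uv k)) ` K \<union> (\<lambda>j. (Vv j, Snk)) ` J) = sum mup K + sum mum J"
proof -
  have "sum (cap mup mum D) ((\<lambda>k. (Src, Uv k)) ` K \<union> (\<lambda>j. (Vv j, Snk)) ` J) =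
        sum (cap mup mum D) ((\<lambda>k. (Src, Uv k)) ` K) + sum (cap mup mum D) ((\<lambda>j. (Vv j, Snk)) ` J)"
    using assms by (intro sum.union_disjoint) auto
  also have "sum (cap mup mum D) ((\<lambda>k. (Src, Uv k)) ` K) = sum mup K"
    by (subst sum.reindex) (auto simp: inj_on_def)
  also have "sum (cap mup mum D) ((\<lambda>j. (Vv j, Snk)) ` J) = sum mum J"
    by (subst sum.reindex) (auto simp: inj_on_def)
  finally show ?thesis .
qed

context stp begin

lemma E1_sub: assumes "H \<in> subgraphs m n p Ap Am C x" shows "E1 n p C x \<subseteq> H"
proof -
  have "E1 n p C x \<inter> E3 m n Ap Am x = {}" by (auto simp: E1_def E3_def)
  moreover have "E1 n p C x \<subseteq> Eext m n p Ap Am C x" unfolding Eext_def by blast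
  moreover have "Eext m n p Ap Am C x - E3 m n Ap Am x \<subseteq> H" using assms unfolding subgraphs_def by simp
  ultimately show ?thesis by blast
qed

lemma E2_sub: assumes "H \<in> subgraphs m n p Ap Am C x" shows "E2 m n Ap Am x \<subseteq> H"
proof -
  have "E2 m n Ap Am x \<inter> E3 m n Ap Am x = {}" by (auto simp: E2_def E3_def)
  moreover have "E2 m n Ap Am x \<subseteq> Eext m n p Ap Am C x" unfolding Eext_def by blast
  moreover have "Eext m n p Ap Am C x - E3 m n Ap Am x \<subseteq> H" using assms unfolding subgraphs_def by simp
  ultimately show ?thesis by blast
qed

lemma in_edge:
  assumes H: "H \<in> subgraphs m n p Ap Am C x" and i: "i<m"
  shows "\<exists>ji<n. (Vv ji, Wv i) \<in> H \<and> rowmax n AM i x = Ap i ji + ereal (x ji)"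
proof -
  have "card {v. (v, Wv i) \<in> H} = 1" using H i unfolding subgraphs_def by auto
  then obtain v where "{v. (v, Wv i) \<in> H} = {v}" by (rule card_1_singletonE)
  then have vH: "(v, Wv i) \<in> H" by auto
  then have "(v, Wv i) \<in> Eext m n p Ap Am C x" using H unfolding subgraphs_def by auto
  then obtain ji where "ji<n" "v = Vv ji" "rowmax n AM i x = Ap i ji + ereal (x ji)"
    unfolding Eext_def E1_def E2_def E3_def by auto
  then show ?thesis using vH by auto
qed

end

context stp begin

lemma noD:
  assumes H: "H \<in> subgraphs m n p Ap Am C x" and lt: "cut_cap mup mum D H X < D"
    and e: "e \<in> H" "fst e \<in> X" "snd e \<notin> X" "cap mup mum D e = D"
  shows False
  using cross_le[OF sub_fin[OF H] e(1-3), of mup mum D] e(4) lt by simp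


lemma feas_desc:
  assumes H: "H \<in> subgraphs m n p Ap Am C x" and X: "X \<in> st_cuts m n p"
    and lt: "cut_cap mup mum D H X < D" and dpos: "0 < \<delta>" and deps: "ereal \<delta> < epsx"
  shows "feasible m n Ap Am (\<lambda>j. x j + (if j < n \<and> Vv j \<notin> X then \<delta> else 0))"
  unfolding feasible_def
proof (intro allI impI)
  fix i assume i: "i<m"
  define y where "y = (\<lambda>j. x j + (if j < n \<and> Vv j \<notin> X then \<delta> else 0))"
  obtain ji where ji: "ji<n" "(Vv ji, Wv i) \<in> H" "rowmax n AM i x = Ap i ji + ereal (x ji)"
    using in_edge[OF H i] by auto
  obtain r where r: "rowmax n AM i x = ereal r" using rowmax_AM_real[OF i] by auto
  have AMle: "AM i j + ereal (x j) \<le> ereal r" if "j<n" for j using rowmax_ge[OF that, of AM i x] r by simp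
  have apji: "Ap i ji = ereal (r - x ji)" using ji(3) r by (cases "Ap i ji") auto
  have amji: "AM i ji + ereal (x ji) = ereal r"
  proof (rule antisym)
    show "AM i ji + ereal (x ji) \<le> ereal r" using AMle[OF ji(1)] .
    have "Ap i ji + ereal (x ji) \<le> AM i ji + ereal (x ji)" by (simp add: Ap_le_AM add_right_mono)
    then show "ereal r \<le> AM i ji + ereal (x ji)" using apji by simp
  qed
  have entry: "Am i j = ereal b \<Longrightarrow> \<exists>a. AM i j = ereal a \<and> b \<le> a \<and> a + x j \<le> r" if j: "j<n" for j b
  proof -
    assume b: "Am i j = ereal b"
    have "AM i j \<noteq> \<infinity>" using AM_fin[OF i j] .
    moreover have "ereal b \<le> AM i j" using Am_le_AM[of i j] b by simp
    ultimately obtain a where a: "AM i j = ereal a" by (cases "AM i j") auto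
    then show ?thesis using AMle[OF j] \<open>ereal b \<le> AM i j\<close> by auto
  qed
  have Amfin: "Am i j \<noteq> \<infinity>" if "j<n" for j using entries_Rmax i that by auto
  show "rowmax n Am i y \<le> rowmax n Ap i y"
  proof (cases "Vv ji \<in> X")
    case False
    have "ereal (r + \<delta>) \<le> rowmax n Ap i y"
      using rowmax_ge[OF ji(1), of Ap i y] apji False ji(1) unfolding y_def by simp
    moreover have "rowmax n Am i y \<le> ereal (r + \<delta>)"
    proof (rule rowmax_le)
      fix j assume j: "j<n"
      show "Am i j + ereal (y j) \<le> ereal (r + \<delta>)"
      proof (cases "Am i j")
        case (real b)
        obtain a where "AM i j = ereal a" "b \<le> a" "a + x j \<le> r" using entry[OF j real] by auto
        then show ?thesis using real dpos unfolding y_def by auto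
      qed (use Amfin[OF j] in auto)
    qed
    ultimately show ?thesis by simp
  next
    case True
    have wX: "Wv i \<in> X"
    proof (rule ccontr)
      assume "Wv i \<notin> X"
      then show False using noD[OF H lt ji(2)] True by simp
    qed
    have Bout: "Vv j \<in> X" if j: "j<n" and bj: "rowmax n AM i x = Am i j + ereal (x j)" for j
    proof (rule ccontr)
      assume nx: "Vv j \<notin> X"
      have "(Wv i, Vv j) \<in> H" using E2_sub[OF H] i j bj unfolding E2_def by auto
      then show False using noD[OF H lt] wX nx by fastforce
    qed
    have low: "ereal r \<le> rowmax n Ap i y"
      using rowmax_ge[OF ji(1), of Ap i y] apji True unfolding y_def by simp
    show ?thesis
    proof (rule rowmax_le)
      fix j assume j: "j<n"
      show "Am i j + ereal (y j) \<le> rowmax n Ap i y"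
      proof (cases "Am i j")
        case (real b)
        obtain a where a: "AM i j = ereal a" "b \<le> a" "a + x j \<le> r" using entry[OF j real] by auto
        show ?thesis
        proof (cases "Vv j \<in> X")
          case True
          then have "Am i j + ereal (y j) \<le> ereal r" using real a unfolding y_def by simp
          then show ?thesis using low by simp
        next
          case nX: False
          have nb: "b + x j \<noteq> r" using Bout[OF j] nX r real by auto
          show ?thesis
          proof (cases "a + x j = r")
            case True
            then have "a \<noteq> b" using nb by auto
            then have "Ap i j = ereal a" using a(1) real unfolding amax_def by (auto simp: max_def split: if_splits)
            then have "Am i j + ereal (y j) \<le> Ap i j + ereal (y j)" using real a by simp
            also have "\<dots> \<le> rowmax n Ap i y" by (rule rowmax_ge[OF j])
            finally show ?thesis .
          next
            case False
            then have "AM i j + ereal (x j) < AM i ji + ereal (x ji)" using a amji by simp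
            from gapd_AM(1)[OF i j ji(1) _ this deps] have "a + x j + \<delta> < r" using a amji by simp
            then have "Am i j + ereal (y j) \<le> ereal r" using real a nX j unfolding y_def by simp
            then show ?thesis using low by simp
          qed
        qed
      qed (use Amfin[OF j] in auto)
    qed
  qed
qed

lemma descent:
  assumes H: "H \<in> subgraphs m n p Ap Am C x" and X: "X \<in> st_cuts m n p"
    and lt: "cut_cap mup mum D H X < D" and dpos: "0 < \<delta>" and deps: "ereal \<delta> < epsx"
  shows "feasible m n Ap Am (\<lambda>j. x j + (if j < n \<and> Vv j \<notin> X then \<delta> else 0)) \<and>
         fobj p n C mup mum (\<lambda>j. x j + (if j < n \<and> Vv j \<notin> X then \<delta> else 0)) < fobj p n C mup mum x"
proof -
  define y where "y = (\<lambda>j. x j + (if j < n \<and> Vv j \<notin> X then \<delta> else 0))"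
  have E1H: "E1 n p C x \<subseteq> H" using E1_sub[OF H] .
  have E2H: "E2 m n Ap Am x \<subseteq> H" using E2_sub[OF H] .
  define ck where "ck k = (\<exists>j<n. (j < n \<and> Vv j \<notin> X) \<and> rowmax n C k x = C k j + ereal (x j))" for k
  have rowC: "rowmax n C k y = rowmax n C k x + ereal (if ck k then \<delta> else 0)" if k: "k<p" for k
    unfolding y_def ck_def
  proof (rule rowmax_shift[where M=C and i=k and n=n and x=x and P="\<lambda>j. j < n \<and> Vv j \<notin> X", OF C_finrow[OF k] _ dpos])
    show "\<exists>j<n. C k j \<noteq> -\<infinity>" using rowsC k by auto
    fix j1 j2 assume "j1<n" "j2<n" "C k j1 \<noteq> -\<infinity>" "C k j1 + ereal (x j1) < C k j2 + ereal (x j2)"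
    then show "C k j1 + ereal (x j1 + \<delta>) < C k j2 + ereal (x j2)" using gapd_C(1)[OF k _ _ _ _ deps] by blast
  qed
  have ckX: "Uv k \<notin> X" if k: "k<p" and c: "ck k" for k
  proof
    assume u: "Uv k \<in> X"
    from c obtain j where j: "j<n" "Vv j \<notin> X" "rowmax n C k x = C k j + ereal (x j)" unfolding ck_def by auto
    have "(Uv k, Vv j) \<in> H" using E1H j k unfolding E1_def by auto
    then show False using noD[OF H lt, of "(Uv k, Vv j)"] u j by simp
  qed
  have fy: "fobj p n C mup mum y - fobj p n C mup mum x =
      (\<Sum>k<p. real (mup k) * (if ck k then \<delta> else 0)) - (\<Sum>j<n. real (mum j) * (if Vv j \<notin> X then \<delta> else 0))"
  proof -
    have "(\<Sum>k<p. real (mup k) * real_of_ereal (rowmax n C k y)) =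
          (\<Sum>k<p. real (mup k) * real_of_ereal (rowmax n C k x) + real (mup k) * (if ck k then \<delta> else 0))"
    proof (rule sum.cong[OF refl])
      fix k assume "k \<in> {..<p}"
      then have k: "k<p" by simp
      obtain r where r: "rowmax n C k x = ereal r" using rowmax_C_real[OF k] by auto
      show "real (mup k) * real_of_ereal (rowmax n C k y) =
            real (mup k) * real_of_ereal (rowmax n C k x) + real (mup k) * (if ck k then \<delta> else 0)"
        using rowC[OF k] r by (simp add: algebra_simps)
    qed
    moreover have "(\<Sum>j<n. real (mum j) * y j) =
          (\<Sum>j<n. real (mum j) * x j + real (mum j) * (if Vv j \<notin> X then \<delta> else 0))"
      by (rule sum.cong[OF refl]) (auto simp: y_def algebra_simps)
    ultimately show ?thesis unfolding fobj_def by (simp add: sum.distrib)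
  qed
  define KX where "KX = {k\<in>{..<p}. Uv k \<notin> X}"
  define JX where "JX = {j\<in>{..<n}. Vv j \<in> X}"
  have lb: "sum mup KX + sum mum JX \<le> cut_cap mup mum D H X"
  proof -
    have "sum (cap mup mum D) ((\<lambda>k. (Src, Uv k)) ` KX \<union> (\<lambda>j. (Vv j, Snk)) ` JX) \<le> cut_cap mup mum D H X"
    proof (rule cut_ge_sub[OF sub_fin[OF H]])
      have "(Src, Uv k) \<in> H" if "k<p" for k
        using H that unfolding subgraphs_def Eext_def E3_def by blast
      moreover have "(Vv j, Snk) \<in> H" if "j<n" for j
        using H that unfolding subgraphs_def Eext_def E3_def by blast
      moreover have "Src \<in> X" "Snk \<notin> X" using X unfolding st_cuts_def by auto
      ultimately show "(\<lambda>k. (Src, Uv k)) ` KX \<union> (\<lambda>j. (Vv j, Snk)) ` JX \<subseteq> {e \<in> H. fst e \<in> X \<and> snd e \<notin> X}"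
        unfolding KX_def JX_def by auto
    qed
    then show ?thesis using sum_st_edges[of KX JX mup mum D] unfolding KX_def JX_def by simp
  qed
  have s1: "(\<Sum>k<p. real (mup k) * (if ck k then \<delta> else 0)) \<le> \<delta> * real (sum mup KX)"
  proof -
    have "(\<Sum>k<p. real (mup k) * (if ck k then \<delta> else 0)) \<le> (\<Sum>k<p. if Uv k \<notin> X then \<delta> * real (mup k) else 0)"
      by (rule sum_mono) (use ckX dpos in auto)
    also have "\<dots> = \<delta> * real (sum mup KX)"
      unfolding KX_def by (simp add: sum.inter_filter[symmetric] sum_distrib_left)
    finally show ?thesis .
  qed
  have s2: "(\<Sum>j<n. real (mum j) * (if Vv j \<notin> X then \<delta> else 0)) = \<delta> * real D - \<delta> * real (sum mum JX)"
  proof -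
    have "(\<Sum>j<n. real (mum j) * (if Vv j \<notin> X then \<delta> else 0)) =
          (\<Sum>j<n. \<delta> * real (mum j) - (if Vv j \<in> X then \<delta> * real (mum j) else 0))"
      by (rule sum.cong) auto
    also have "\<dots> = (\<Sum>j<n. \<delta> * real (mum j)) - (\<Sum>j\<in>JX. \<delta> * real (mum j))"
      unfolding JX_def by (simp add: sum_subtractf sum.inter_filter[symmetric])
    also have "(\<Sum>j<n. \<delta> * real (mum j)) = \<delta> * real D"
    proof -
      have "real D = (\<Sum>j<n. real (mum j))" using sum_minus by (simp flip: of_nat_sum)
      then show ?thesis by (simp add: sum_distrib_left)
    qed
    also have "(\<Sum>j\<in>JX. \<delta> * real (mum j)) = \<delta> * real (sum mum JX)"
      by (simp add: sum_distrib_left)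
    finally show ?thesis .
  qed
  have "real (sum mup KX) + real (sum mum JX) < real D" using lb lt by linarith
  then have "\<delta> * real (sum mup KX) - (\<delta> * real D - \<delta> * real (sum mum JX)) < 0"
    using dpos by (simp add: algebra_simps) (metis distrib_left mult_strict_left_mono of_nat_add)
  then have fdec: "fobj p n C mup mum y < fobj p n C mup mum x" using fy s1 s2 by linarith
  have "feasible m n Ap Am y" unfolding y_def by (rule feas_desc[OF H X lt dpos deps])
  then show ?thesis using fdec unfolding y_def by simp
qed

end

context stp begin

lemma feas_local:
  assumes fy: "feasible m n Ap Am y" and d0: "0 < \<delta>0" "ereal (2*\<delta>0) \<le> epsx"
    and dd: "\<And>j. j<n \<Longrightarrow> \<bar>y j - x j\<bar> < \<delta>0" and i: "i<m" and jB: "j \<in> Bi i"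
  shows "\<exists>j'\<in>Ai i. y j - x j \<le> y j' - x j'"
proof (rule ccontr)
  assume con: "\<not> (\<exists>j'\<in>Ai i. y j - x j \<le> y j' - x j')"
  define d where "d j = y j - x j" for j
  have fB: "finite (Bi i)" unfolding Bi_def by auto
  define \<beta> where "\<beta> = Max (d ` Bi i)"
  have "\<beta> \<in> d ` Bi i" unfolding \<beta>_def using fB jB by (intro Max_in) auto
  then obtain jb where jb: "jb \<in> Bi i" "d jb = \<beta>" by auto
  have djb: "d j \<le> \<beta>" unfolding \<beta>_def using fB jB by (intro Max_ge) auto
  have Alt: "d j' < \<beta>" if "j' \<in> Ai i" for j' using con that djb unfolding d_def by force
  have jbn: "jb < n" and jbR: "rowmax n AM i x = Am i jb + ereal (x jb)" using jb(1) unfolding Bi_def by auto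
  obtain r where r: "rowmax n AM i x = ereal r" using rowmax_AM_real[OF i] by auto
  have amjb: "Am i jb = ereal (r - x jb)" using jbR r by (cases "Am i jb") auto
  have betalow: "-\<delta>0 < \<beta>" using dd[OF jbn] jb(2) unfolding d_def by auto
  have hiAm: "ereal (r + \<beta>) \<le> rowmax n Am i y"
  proof -
    have eq: "r + \<beta> = r - x jb + y jb" using jb(2) unfolding d_def by simp
    have e: "ereal (r - x jb + y jb) \<le> rowmax n Am i y" using rowmax_ge[OF jbn, of Am i y] amjb by simp
    show ?thesis by (subst eq) (rule e)
  qed
  have n: "0 < n" using jbn by auto
  obtain j0 where j0: "j0<n" "rowmax n AM i x = AM i j0 + ereal (x j0)" using rowmax_att[OF n, of AM i x] by auto
  have r0: "AM i j0 + ereal (x j0) = ereal r" using j0 r by simp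
  obtain j1 where j1: "j1<n" "rowmax n Ap i y = Ap i j1 + ereal (y j1)" using rowmax_att[OF n, of Ap i y] by auto
  have "Ap i j1 + ereal (y j1) < ereal (r + \<beta>)"
  proof (cases "Ap i j1")
    case (real a)
    have "AM i j1 \<noteq> \<infinity>" using AM_fin[OF i j1(1)] .
    moreover have "ereal a \<le> AM i j1" using Ap_le_AM[of i j1] real by simp
    ultimately obtain c where c: "AM i j1 = ereal c" by (cases "AM i j1") auto
    have ac: "a \<le> c" using Ap_le_AM[of i j1] real c by simp
    have cr: "c + x j1 \<le> r" using rowmax_ge[OF j1(1), of AM i x] r c by simp
    show ?thesis
    proof (cases "c + x j1 < r")
      case True
      then have "AM i j1 + ereal (x j1) < AM i j0 + ereal (x j0)" using c r0 by simp
      from gapd_AM(2)[OF i j1(1) j0(1) _ this d0(2)] have "c + x j1 + 2*\<delta>0 \<le> r" using c r0 by simp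
      moreover have "y j1 < x j1 + \<delta>0" using dd[OF j1(1)] by auto
      ultimately show ?thesis using real ac betalow by simp
    next
      case False
      then have cr': "c + x j1 = r" using cr by simp
      show ?thesis
      proof (cases "a = c")
        case True
        then have "j1 \<in> Ai i" using j1(1) r real cr' unfolding Ai_def by auto
        then have "d j1 < \<beta>" by (rule Alt)
        then show ?thesis using real True cr' unfolding d_def by simp
      next
        case False
        then have "Am i j1 = ereal c" using c real unfolding amax_def by (auto simp: max_def split: if_splits)
        then have "j1 \<in> Bi i" using j1(1) r cr' unfolding Bi_def by auto
        then have "d j1 \<le> \<beta>" unfolding \<beta>_def using fB by (intro Max_ge) auto
        then show ?thesis using real False ac cr' unfolding d_def by simp
      qed
    qed
  qed (use entries_Rmax i j1(1) in auto)
  then have "rowmax n Ap i y < rowmax n Am i y" using j1(2) hiAm by simp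
  then show False using fy i unfolding feasible_def by (simp add: not_le[symmetric])
qed

lemma st_cuts_fin: "finite (st_cuts m n p)"
proof -
  have "st_cuts m n p \<subseteq> Pow (verts m n p)" unfolding st_cuts_def by auto
  then show ?thesis using verts_fin finite_subset by blast
qed

lemma min_cut_le: "X \<in> st_cuts m n p \<Longrightarrow> min_cut m n p mup mum D H \<le> cut_cap mup mum D H X"
  unfolding min_cut_def using st_cuts_fin by (intro Min_le) auto

lemma construct:
  assumes J: "J \<subseteq> {..<n}" and clo: "\<forall>i\<in>{..<m}. Bi i \<inter> J \<noteq> {} \<longrightarrow> Ai i \<inter> J \<noteq> {}"
    and g: "(\<Sum>k\<in>{..<p}. if Sk k \<inter> J \<noteq> {} then real (mup k) else 0) < (\<Sum>j\<in>J. real (mum j))"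
  shows "\<exists>H\<in>subgraphs m n p Ap Am C x. min_cut m n p mup mum D H < D"
proof -
  define jsel where "jsel i = (if Ai i \<inter> J \<noteq> {} then SOME j. j \<in> Ai i \<inter> J else SOME j. j \<in> Ai i)" for i
  have jsel_A: "jsel i \<in> Ai i" if i: "i<m" for i
  proof (cases "Ai i \<inter> J \<noteq> {}")
    case True
    have ex: "\<exists>j. j \<in> Ai i \<inter> J" using True by blast
    have "(SOME j. j \<in> Ai i \<inter> J) \<in> Ai i \<inter> J" by (rule someI_ex[OF ex])
    moreover have "jsel i = (SOME j. j \<in> Ai i \<inter> J)" unfolding jsel_def by (rule if_P[OF True])
    ultimately show ?thesis by simp
  next
    case False
    have "(SOME j. j \<in> Ai i) \<in> Ai i" by (rule someI_ex[OF Ai_ne[OF i]])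
    moreover have "jsel i = (SOME j. j \<in> Ai i)" unfolding jsel_def by (rule if_not_P[OF False])
    ultimately show ?thesis by simp
  qed
  have jsel_J: "jsel i \<in> J" if T: "Ai i \<inter> J \<noteq> {}" for i
  proof -
    have ex: "\<exists>j. j \<in> Ai i \<inter> J" using T by blast
    have "(SOME j. j \<in> Ai i \<inter> J) \<in> Ai i \<inter> J" by (rule someI_ex[OF ex])
    moreover have "jsel i = (SOME j. j \<in> Ai i \<inter> J)" unfolding jsel_def by (rule if_P[OF T])
    ultimately show ?thesis by simp
  qed
  define H where "H = (Eext m n p Ap Am C x - E3 m n Ap Am x) \<union> {(Vv (jsel i), Wv i) | i. i<m}"
  define X where "X = {Src} \<union> Uv ` {k. k<p \<and> Sk k \<inter> J = {}} \<union> Vv ` {j. j<n \<and> j \<notin> J} \<union> Wv ` {i. i<m \<and> Ai i \<inter> J = {}}"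
  have memU: "Uv k \<in> X \<longleftrightarrow> k<p \<and> Sk k \<inter> J = {}" for k unfolding X_def by auto
  have memV: "Vv j \<in> X \<longleftrightarrow> j<n \<and> j \<notin> J" for j unfolding X_def by auto
  have memW: "Wv i \<in> X \<longleftrightarrow> i<m \<and> Ai i \<inter> J = {}" for i unfolding X_def by auto
  have memS: "Src \<in> X" "Snk \<notin> X" unfolding X_def by auto
  have E3in: "(Vv (jsel i), Wv i) \<in> E3 m n Ap Am x" if "i<m" for i
    using jsel_A[OF that] that unfolding Ai_def E3_def by auto
  have HE: "H \<subseteq> Eext m n p Ap Am C x"
  proof -
    have "{(Vv (jsel i), Wv i) | i. i<m} \<subseteq> E3 m n Ap Am x" using E3in by auto
    then show ?thesis unfolding H_def Eext_def by blast
  qed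
  have inW: "{v. (v, Wv i) \<in> H} = {Vv (jsel i)}" if i: "i<m" for i
  proof
    show "{Vv (jsel i)} \<subseteq> {v. (v, Wv i) \<in> H}" using i unfolding H_def by auto
    show "{v. (v, Wv i) \<in> H} \<subseteq> {Vv (jsel i)}"
    proof
      fix v assume "v \<in> {v. (v, Wv i) \<in> H}"
      then have vH: "(v, Wv i) \<in> H" by simp
      have "(v, Wv i) \<notin> Eext m n p Ap Am C x - E3 m n Ap Am x"
        unfolding Eext_def E1_def E2_def E3_def by auto
      then show "v \<in> {Vv (jsel i)}" using vH unfolding H_def by auto
    qed
  qed
  have HE2: "Eext m n p Ap Am C x - E3 m n Ap Am x \<subseteq> H" unfolding H_def by blast
  have Hs: "H \<in> subgraphs m n p Ap Am C x"
    unfolding subgraphs_def using HE HE2 inW by simp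
  have Xs: "X \<in> st_cuts m n p"
    unfolding st_cuts_def X_def verts_def by auto
  define Z where "Z = (\<lambda>k. (Src, Uv k)) ` {k\<in>{..<p}. Sk k \<inter> J \<noteq> {}} \<union> (\<lambda>j. (Vv j, Snk)) ` {j\<in>{..<n}. j \<notin> J}"
  have cross: "{e\<in>H. fst e \<in> X \<and> snd e \<notin> X} \<subseteq> Z"
  proof
    fix e assume "e \<in> {e\<in>H. fst e \<in> X \<and> snd e \<notin> X}"
    then have eH: "e \<in> H" and ef: "fst e \<in> X" and es: "snd e \<notin> X" by auto
    show "e \<in> Z"
    proof (cases "e \<in> {(Vv (jsel i), Wv i) | i. i<m}")
      case True
      then obtain i where i: "i<m" "e = (Vv (jsel i), Wv i)" by auto
      then have "jsel i \<notin> J" using ef memV by auto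
      then have "Ai i \<inter> J = {}" using jsel_J by auto
      then have False using es i memW by auto
      then show ?thesis ..
    next
      case False
      then have "e \<in> Eext m n p Ap Am C x" using eH unfolding H_def by auto
      then consider (e1) "e \<in> E1 n p C x" | (e2) "e \<in> E2 m n Ap Am x" | (e3) "e \<in> E3 m n Ap Am x"
        | (s) "e \<in> {(Src, Uv k) | k. k < p}" | (t) "e \<in> {(Vv j, Snk) | j. j < n}"
        unfolding Eext_def by blast
      then show ?thesis
      proof cases
        case e1
        then obtain k j where kj: "e = (Uv k, Vv j)" "k<p" "j<n" "rowmax n C k x = C k j + ereal (x j)"
          unfolding E1_def by auto
        then have "j \<in> Sk k" unfolding Sk_def by auto
        moreover have "Sk k \<inter> J = {}" using ef kj memU by auto
        moreover have "j \<in> J" using es kj memV by auto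
        ultimately show ?thesis by auto
      next
        case e2
        then obtain i j where ij: "e = (Wv i, Vv j)" "i<m" "j<n" "rowmax n AM i x = Am i j + ereal (x j)"
          unfolding E2_def by auto
        then have "j \<in> Bi i" unfolding Bi_def by auto
        moreover have "Ai i \<inter> J = {}" using ef ij memW by auto
        moreover have "j \<in> J" using es ij memV by auto
        ultimately show ?thesis using clo ij(2) by auto
      next
        case e3
        then show ?thesis using eH False unfolding H_def by auto
      next
        case s
        then obtain k where "e = (Src, Uv k)" "k<p" by auto
        then show ?thesis using es memU unfolding Z_def by auto
      next
        case t
        then obtain j where "e = (Vv j, Snk)" "j<n" by auto
        then show ?thesis using ef memV unfolding Z_def by auto
      qed
    qed
  qed
  have "cut_cap mup mum D H X \<le> sum (cap mup mum D) Z"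
    by (rule cut_le_super[OF _ cross]) (simp add: Z_def)
  also have "\<dots> = sum mup {k\<in>{..<p}. Sk k \<inter> J \<noteq> {}} + sum mum {j\<in>{..<n}. j \<notin> J}"
    unfolding Z_def by (rule sum_st_edges) auto
  finally have cc: "cut_cap mup mum D H X \<le> sum mup {k\<in>{..<p}. Sk k \<inter> J \<noteq> {}} + sum mum {j\<in>{..<n}. j \<notin> J}" .
  have r1: "real (sum mup {k\<in>{..<p}. Sk k \<inter> J \<noteq> {}}) = (\<Sum>k\<in>{..<p}. if Sk k \<inter> J \<noteq> {} then real (mup k) else 0)"
  proof -
    have "real (sum mup {k\<in>{..<p}. Sk k \<inter> J \<noteq> {}}) = (\<Sum>k\<in>{k\<in>{..<p}. Sk k \<inter> J \<noteq> {}}. real (mup k))"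
      by (rule of_nat_sum)
    also have "\<dots> = (\<Sum>k\<in>{..<p}. if Sk k \<inter> J \<noteq> {} then real (mup k) else 0)"
      by (rule sum.inter_filter) simp
    finally show ?thesis .
  qed
  have r2: "sum mum {j\<in>{..<n}. j \<notin> J} + sum mum J = D"
  proof -
    have "{j\<in>{..<n}. j \<notin> J} = {..<n} - J" by auto
    then show ?thesis using sum.subset_diff[OF J, of mum] sum_minus by simp
  qed
  have "real (cut_cap mup mum D H X) < real D"
  proof -
    have "real (cut_cap mup mum D H X) \<le> real (sum mup {k\<in>{..<p}. Sk k \<inter> J \<noteq> {}}) + real (sum mum {j\<in>{..<n}. j \<notin> J})"
    proof -
      have "real (cut_cap mup mum D H X) \<le> real (sum mup {k\<in>{..<p}. Sk k \<inter> J \<noteq> {}} + sum mum {j\<in>{..<n}. j \<notin> J})"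
        using cc by (simp only: of_nat_le_iff)
      then show ?thesis by (simp only: of_nat_add)
    qed
    moreover have "real D = real (sum mum {j\<in>{..<n}. j \<notin> J}) + (\<Sum>j\<in>J. real (mum j))"
      using r2 by (simp flip: of_nat_sum of_nat_add)
    ultimately show ?thesis using g r1 by linarith
  qed
  then have "min_cut m n p mup mum D H < D" using min_cut_le[OF Xs, of H] by simp
  then show ?thesis using Hs by auto
qed

lemma hard:
  assumes nlo: "\<not> local_opt m n p Ap Am C mup mum x"
  shows "\<exists>H\<in>subgraphs m n p Ap Am C x. min_cut m n p mup mum D H < D"
proof -
  obtain \<delta>0 where d0: "0 < \<delta>0" "ereal (2*\<delta>0) \<le> epsx"
  proof (cases epsx)
    case (real e)
    then have "0<e" using eps_pos by simp
    then show ?thesis using that[of "e/2"] real by simp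
  next
    case PInf then show ?thesis using that[of 1] by simp
  next
    case MInf then show ?thesis using eps_pos by simp
  qed
  have "\<not> (\<forall>y. feasible m n Ap Am y \<and> (\<forall>j<n. \<bar>x j - y j\<bar> < \<delta>0) \<longrightarrow> fobj p n C mup mum y \<ge> fobj p n C mup mum x)"
    using nlo feas d0(1) unfolding local_opt_def by blast
  then obtain y where y: "feasible m n Ap Am y" "\<forall>j<n. \<bar>x j - y j\<bar> < \<delta>0" "fobj p n C mup mum y < fobj p n C mup mum x"
    by (auto simp: not_le)
  define d where "d j = y j - x j" for j
  have dd: "\<bar>y j - x j\<bar> < \<delta>0" if "j<n" for j using y(2) that by (simp add: abs_minus_commute)
  have rowC: "rowmax n C k y = rowmax n C k x + ereal (Max (d ` Sk k))" if k: "k<p" for k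
    unfolding Sk_def d_def
  proof (rule rowmax_local[where M=C and i=k and n=n and x=x and y=y, OF C_finrow[OF k]])
    show "\<exists>j<n. C k j \<noteq> -\<infinity>" using rowsC k by auto
    fix j1 j2 assume "j1<n" "j2<n" "C k j1 \<noteq> -\<infinity>" "C k j1 + ereal (x j1) < C k j2 + ereal (x j2)"
    then show "C k j1 + ereal (x j1 + 2*\<delta>0) \<le> C k j2 + ereal (x j2)" using gapd_C(2)[OF k _ _ _ _ d0(2)] by blast
  qed (use dd in auto)
  have neg: "(\<Sum>k\<in>{..<p}. real (mup k) * Max (d ` Sk k)) - (\<Sum>j\<in>{..<n}. real (mum j) * d j) < 0"
  proof -
    have "(\<Sum>k<p. real (mup k) * real_of_ereal (rowmax n C k y)) =
          (\<Sum>k<p. real (mup k) * real_of_ereal (rowmax n C k x) + real (mup k) * Max (d ` Sk k))"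
    proof (rule sum.cong[OF refl])
      fix k assume "k \<in> {..<p}"
      then have k: "k<p" by simp
      obtain r where r: "rowmax n C k x = ereal r" using rowmax_C_real[OF k] by auto
      show "real (mup k) * real_of_ereal (rowmax n C k y) =
            real (mup k) * real_of_ereal (rowmax n C k x) + real (mup k) * Max (d ` Sk k)"
        using rowC[OF k] r by (simp add: algebra_simps)
    qed
    moreover have "(\<Sum>j<n. real (mum j) * y j) = (\<Sum>j<n. real (mum j) * x j + real (mum j) * d j)"
      by (rule sum.cong[OF refl]) (auto simp: d_def algebra_simps)
    ultimately have "fobj p n C mup mum y - fobj p n C mup mum x =
        (\<Sum>k\<in>{..<p}. real (mup k) * Max (d ` Sk k)) - (\<Sum>j\<in>{..<n}. real (mum j) * d j)"
      unfolding fobj_def by (simp add: sum.distrib)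
    then show ?thesis using y(3) by simp
  qed
  have Sprop: "Sk k \<subseteq> {..<n} \<and> Sk k \<noteq> {}" if k: "k \<in> {..<p}" for k
  proof -
    have n: "0<n" using rowsC k by auto
    obtain j where "j<n" "rowmax n C k x = C k j + ereal (x j)" using rowmax_att[OF n, of C k x] by auto
    then show ?thesis unfolding Sk_def by auto
  qed
  have Aprop: "Ai i \<subseteq> {..<n}" for i unfolding Ai_def by auto
  have bal: "(\<Sum>k\<in>{..<p}. real (mup k)) = (\<Sum>j\<in>{..<n}. real (mum j))"
  proof -
    have "(\<Sum>k\<in>{..<p}. real (mup k)) = real D" using sum_plus by (simp flip: of_nat_sum)
    also have "\<dots> = (\<Sum>j\<in>{..<n}. real (mum j))" using sum_minus by (simp flip: of_nat_sum)
    finally show ?thesis .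
  qed
  have cons: "\<exists>j'\<in>Ai i. d j \<le> d j'" if "i \<in> {..<m}" "j \<in> Bi i" for i j
    using feas_local[OF y(1) d0 dd, of i j] that unfolding d_def by auto
  obtain J where J: "J \<subseteq> {..<n}" "\<forall>i\<in>{..<m}. Bi i \<inter> J \<noteq> {} \<longrightarrow> Ai i \<inter> J \<noteq> {}"
    "(\<Sum>k\<in>{..<p}. if Sk k \<inter> J \<noteq> {} then real (mup k) else 0) < (\<Sum>j\<in>J. real (mum j))"
    using layer[where N="{..<n}" and P="{..<p}" and I="{..<m}" and Sf=Sk and Af=Ai and Bf=Bi and d=d and mup=mup and mum=mum,
        OF finite_lessThan finite_lessThan Sprop Aprop bal cons neg] by blast
  show ?thesis by (rule construct[OF J])
qed

end

theorem theorem1p2: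
  fixes m n p D :: nat
    and Ap Am C :: "nat \<Rightarrow> nat \<Rightarrow> ereal"
    and mup mum :: "nat \<Rightarrow> nat"
    and x :: "nat \<Rightarrow> real"
  assumes entries_Rmax: "\<forall>i<m. \<forall>j<n. Ap i j \<noteq> \<infinity> \<and> Am i j \<noteq> \<infinity>"
    and entries_Rmax_C: "\<forall>k<p. \<forall>j<n. C k j \<noteq> \<infinity>"
    and rowsA: "\<forall>i<m. \<exists>j<n. amax Ap Am i j \<noteq> -\<infinity>"
    and rowsC: "\<forall>k<p. \<exists>j<n. C k j \<noteq> -\<infinity>"
    and sum_plus: "(\<Sum>k<p. mup k) = D"
    and sum_minus: "(\<Sum>j<n. mum j) = D"
    and conn: "graph_connected m n p Ap Am C"
    and feas: "feasible m n Ap Am x"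
  shows "(local_opt m n p Ap Am C mup mum x \<longleftrightarrow>
            (\<forall>H\<in>subgraphs m n p Ap Am C x. min_cut m n p mup mum D H = D))
       \<and> (\<not> local_opt m n p Ap Am C mup mum x \<longrightarrow>
            (\<exists>H\<in>subgraphs m n p Ap Am C x. \<exists>X\<in>st_cuts m n p.
               cut_cap mup mum D H X = min_cut m n p mup mum D H \<and> cut_cap mup mum D H X < D \<and>
               (\<forall>\<delta>::real. 0 < \<delta> \<and> ereal \<delta> < eps m n p Ap Am C x \<longrightarrow>
                  (let y = (\<lambda>j. x j + (if j < n \<and> Vv j \<notin> X then \<delta> else 0)) in
                     feasible m n Ap Am y \<and> fobj p n C mup mum y < fobj p n C mup mum x))))"
proof -
  interpret S: stp m n p D Ap Am C mup mum x
    using entries_Rmax entries_Rmax_C rowsA rowsC sum_plus sum_minus feas by unfold_locales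
  define X0 where "X0 = {Src}"
  have X0s: "X0 \<in> st_cuts m n p" unfolding X0_def st_cuts_def verts_def by auto
  have le_D: "min_cut m n p mup mum D H \<le> D" if H: "H \<in> subgraphs m n p Ap Am C x" for H
  proof -
    have HE: "H \<subseteq> Eext m n p Ap Am C x" using H unfolding subgraphs_def by auto
    have cr: "{e\<in>H. fst e \<in> X0 \<and> snd e \<notin> X0} \<subseteq> (\<lambda>k. (Src, Uv k)) ` {..<p} \<union> (\<lambda>j. (Vv j, Snk)) ` {}"
    proof
      fix e assume e: "e \<in> {e\<in>H. fst e \<in> X0 \<and> snd e \<notin> X0}"
      then have "e \<in> Eext m n p Ap Am C x" "fst e = Src" using HE unfolding X0_def by auto
      then show "e \<in> (\<lambda>k. (Src, Uv k)) ` {..<p} \<union> (\<lambda>j. (Vv j, Snk)) ` {}"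
        unfolding Eext_def E1_def E2_def E3_def by auto
    qed
    have "cut_cap mup mum D H X0 \<le> sum (cap mup mum D) ((\<lambda>k. (Src, Uv k)) ` {..<p} \<union> (\<lambda>j. (Vv j, Snk)) ` {})"
      by (rule cut_le_super[OF _ cr]) simp
    also have "\<dots> = sum mup {..<p} + sum mum {}" by (rule sum_st_edges) auto
    finally have "cut_cap mup mum D H X0 \<le> D" using sum_plus by simp
    then show ?thesis using S.min_cut_le[OF X0s, of H] by simp
  qed
  have att: "\<exists>X\<in>st_cuts m n p. cut_cap mup mum D H X = min_cut m n p mup mum D H" for H
  proof -
    have "min_cut m n p mup mum D H \<in> cut_cap mup mum D H ` st_cuts m n p"
      unfolding min_cut_def using S.st_cuts_fin X0s by (intro Min_in) auto
    then show ?thesis by auto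
  qed
  have desc: "\<exists>X\<in>st_cuts m n p.
               cut_cap mup mum D H X = min_cut m n p mup mum D H \<and> cut_cap mup mum D H X < D \<and>
               (\<forall>\<delta>::real. 0 < \<delta> \<and> ereal \<delta> < eps m n p Ap Am C x \<longrightarrow>
                  (let y = (\<lambda>j. x j + (if j < n \<and> Vv j \<notin> X then \<delta> else 0)) in
                     feasible m n Ap Am y \<and> fobj p n C mup mum y < fobj p n C mup mum x))"
    if H: "H \<in> subgraphs m n p Ap Am C x" and lt: "min_cut m n p mup mum D H < D" for H
  proof -
    obtain X where X: "X \<in> st_cuts m n p" "cut_cap mup mum D H X = min_cut m n p mup mum D H" using att by blast
    have lt': "cut_cap mup mum D H X < D" using X lt by simp
    show ?thesis using X lt' S.descent[OF H X(1) lt'] unfolding Let_def by blast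
  qed
  obtain \<delta>1 where d1: "0 < \<delta>1" "ereal \<delta>1 < eps m n p Ap Am C x"
  proof (cases "eps m n p Ap Am C x")
    case (real e)
    then have "0<e" using S.eps_pos by simp
    then show ?thesis using that[of "e/2"] real by simp
  next
    case PInf then show ?thesis using that[of 1] by simp
  next
    case MInf then show ?thesis using S.eps_pos by simp
  qed
  have A1: "\<forall>H\<in>subgraphs m n p Ap Am C x. min_cut m n p mup mum D H = D"
    if lo: "local_opt m n p Ap Am C mup mum x"
  proof
    fix H assume H: "H \<in> subgraphs m n p Ap Am C x"
    show "min_cut m n p mup mum D H = D"
    proof (rule ccontr)
      assume "min_cut m n p mup mum D H \<noteq> D"
      then have lt: "min_cut m n p mup mum D H < D" using le_D[OF H] by simp
      obtain X where X: "X \<in> st_cuts m n p" "cut_cap mup mum D H X = min_cut m n p mup mum D H" using att by blast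
      have lt': "cut_cap mup mum D H X < D" using X lt by simp
      obtain \<delta>l where dl: "\<delta>l > 0" "\<forall>y. feasible m n Ap Am y \<and> (\<forall>j<n. \<bar>x j - y j\<bar> < \<delta>l)
                \<longrightarrow> fobj p n C mup mum y \<ge> fobj p n C mup mum x"
        using lo unfolding local_opt_def by blast
      define \<delta> where "\<delta> = min \<delta>1 (\<delta>l/2)"
      have dpos: "0 < \<delta>" unfolding \<delta>_def using d1 dl by simp
      have deps: "ereal \<delta> < eps m n p Ap Am C x"
        using d1(2) unfolding \<delta>_def by (meson ereal_less_eq(3) min.cobounded1 order_le_less_trans)
      define y where "y = (\<lambda>j. x j + (if j < n \<and> Vv j \<notin> X then \<delta> else 0))"
      have fy: "feasible m n Ap Am y \<and> fobj p n C mup mum y < fobj p n C mup mum x"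
        using S.descent[OF H X(1) lt' dpos deps] unfolding y_def .
      have "\<forall>j<n. \<bar>x j - y j\<bar> < \<delta>l" using dpos dl(1) unfolding y_def \<delta>_def by auto
      then have "fobj p n C mup mum y \<ge> fobj p n C mup mum x" using dl(2) fy by blast
      then show False using fy by simp
    qed
  qed
  have A2: "local_opt m n p Ap Am C mup mum x"
    if all: "\<forall>H\<in>subgraphs m n p Ap Am C x. min_cut m n p mup mum D H = D"
  proof (rule ccontr)
    assume "\<not> local_opt m n p Ap Am C mup mum x"
    from S.hard[OF this] obtain H where "H \<in> subgraphs m n p Ap Am C x" "min_cut m n p mup mum D H < D" by blast
    then show False using all by auto
  qed
  have B: "\<exists>H\<in>subgraphs m n p Ap Am C x. \<exists>X\<in>st_cuts m n p.
               cut_cap mup mum D H X = min_cut m n p mup mum D H \<and> cut_cap mup mum D H X < D \<and>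
               (\<forall>\<delta>::real. 0 < \<delta> \<and> ereal \<delta> < eps m n p Ap Am C x \<longrightarrow>
                  (let y = (\<lambda>j. x j + (if j < n \<and> Vv j \<notin> X then \<delta> else 0)) in
                     feasible m n Ap Am y \<and> fobj p n C mup mum y < fobj p n C mup mum x))"
    if nlo: "\<not> local_opt m n p Ap Am C mup mum x"
  proof -
    from S.hard[OF nlo] obtain H where H: "H \<in> subgraphs m n p Ap Am C x" "min_cut m n p mup mum D H < D" by blast
    show ?thesis using desc[OF H] H(1) by blast
  qed
  show ?thesis using A1 A2 B by blast
qed

end
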